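(* Every perinormal domain $R$ satisfies (R$_1$), i.e., $R_{\mathfrak{p}}$ is a valuation domain for every height one prime $\mathfrak{p}$ of $R$.
   Context: All rings are commutative with identity; "local" means having a unique maximal ideal; an overring of a domain $R$ is a ring between $R$ and its fraction field. A ring extension $A \subseteq B$ satisfies going-down if whenever $\mathfrak{p} \subset \mathfrak{q}$ are primes of $A$ and $Q$ is a prime of $B$ with $Q \cap A = \mathfrak{q}$, there is a prime $P \subseteq Q$ of $B$ with $P \cap A = \mathfrak{p}$. A domain $R$ is perinormal if every local overring $S$ of $R$ such that $R \subseteq S$ satisfies going-down is a localization of $R$. *)

theory Defs
  imports "HOL-Computational_Algebra.Fraction_Field"
begin

text \<open>The domain R is the type 'a :: idom; its fraction field is 'a fract.
Overrings are subsets of 'a fract containing the image of R.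
Ideals/primes of R are ideals/primes of the subring UNIV :: 'a set.\<close>

definition subring_of :: "'b::comm_ring_1 set \<Rightarrow> bool" where
  "subring_of S \<longleftrightarrow> 0 \<in> S \<and> 1 \<in> S \<and>
     (\<forall>x\<in>S. \<forall>y\<in>S. x + y \<in> S \<and> x - y \<in> S \<and> x * y \<in> S)"

definition ideal_in :: "'b::comm_ring_1 set \<Rightarrow> 'b set \<Rightarrow> bool" where
  "ideal_in S I \<longleftrightarrow> I \<subseteq> S \<and> 0 \<in> I \<and>
     (\<forall>x\<in>I. \<forall>y\<in>I. x + y \<in> I) \<and> (\<forall>x\<in>I. - x \<in> I) \<and>
     (\<forall>s\<in>S. \<forall>x\<in>I. s * x \<in> I)"

definition prime_in :: "'b::comm_ring_1 set \<Rightarrow> 'b set \<Rightarrow> bool" where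
  "prime_in S P \<longleftrightarrow> ideal_in S P \<and> P \<noteq> S \<and>
     (\<forall>a\<in>S. \<forall>b\<in>S. a * b \<in> P \<longrightarrow> a \<in> P \<or> b \<in> P)"

definition maximal_in :: "'b::comm_ring_1 set \<Rightarrow> 'b set \<Rightarrow> bool" where
  "maximal_in S M \<longleftrightarrow> ideal_in S M \<and> M \<noteq> S \<and>
     (\<forall>J. ideal_in S J \<and> M \<subseteq> J \<and> J \<noteq> S \<longrightarrow> J = M)"

definition local_ring :: "'b::comm_ring_1 set \<Rightarrow> bool" where
  "local_ring S \<longleftrightarrow> (\<exists>!M. maximal_in S M)"

definition emb :: "'a::idom \<Rightarrow> 'a fract" where
  "emb a = Fract a 1"

definition overring :: "'a::idom fract set \<Rightarrow> bool" where
  "overring S \<longleftrightarrow> subring_of S \<and> range emb \<subseteq> S"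

definition contract :: "'a::idom fract set \<Rightarrow> 'a set" where
  "contract P = {a. emb a \<in> P}"

definition going_down :: "'a::idom fract set \<Rightarrow> bool" where
  "going_down S \<longleftrightarrow>
     (\<forall>p q Q. prime_in (UNIV :: 'a set) p \<and> prime_in (UNIV :: 'a set) q \<and> p \<subset> q \<and>
        prime_in S Q \<and> contract Q = q \<longrightarrow>
        (\<exists>P. prime_in S P \<and> P \<subseteq> Q \<and> contract P = p))"

definition multiplicative :: "'a::idom set \<Rightarrow> bool" where
  "multiplicative M \<longleftrightarrow> 1 \<in> M \<and> 0 \<notin> M \<and> (\<forall>x\<in>M. \<forall>y\<in>M. x * y \<in> M)"

definition localization :: "'a::idom set \<Rightarrow> 'a fract set" where
  "localization M = {Fract a s | a s. s \<in> M}"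

definition is_localization :: "'a::idom fract set \<Rightarrow> bool" where
  "is_localization S \<longleftrightarrow> (\<exists>M. multiplicative M \<and> S = localization M)"

definition perinormal :: "'a::idom itself \<Rightarrow> bool" where
  "perinormal TYPE('a) \<longleftrightarrow>
     (\<forall>S :: 'a fract set. overring S \<and> local_ring S \<and> going_down S \<longrightarrow> is_localization S)"

definition height_one_prime :: "'a::idom set \<Rightarrow> bool" where
  "height_one_prime p \<longleftrightarrow> prime_in UNIV p \<and> {0} \<subset> p \<and>
     \<not> (\<exists>q. prime_in UNIV q \<and> {0} \<subset> q \<and> q \<subset> p)"

definition localize_at :: "'a::idom set \<Rightarrow> 'a fract set" where
  "localize_at p = localization (- p)"

definition valuation_ring :: "'b::field set \<Rightarrow> bool" where
  "valuation_ring V \<longleftrightarrow> subring_of V \<and> (\<forall>x. x \<noteq> 0 \<longrightarrow> x \<in> V \<or> inverse x \<in> V)"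

end

theory Submission
  imports Defs "HOL-Computational_Algebra.Polynomial"
begin

lemma subring_ideal_self: assumes "subring_of A" shows "ideal_in A A"
  unfolding ideal_in_def
proof (intro conjI ballI)
  show "A \<subseteq> A" by simp
  show "0 \<in> A" using assms by (simp add: subring_of_def)
  fix x assume x: "x \<in> A"
  have "0 - x \<in> A" using assms x unfolding subring_of_def by blast
  then show "- x \<in> A" by simp
next
  fix x z assume "x \<in> A" "z \<in> A"
  then show "x + z \<in> A" "x * z \<in> A" using assms by (simp_all add: subring_of_def)
qed

lemma ideal_sub: "ideal_in S I \<Longrightarrow> I \<subseteq> S" by (simp add: ideal_in_def)
lemma ideal_0: "ideal_in S I \<Longrightarrow> 0 \<in> I" by (simp add: ideal_in_def)
lemma ideal_add: "ideal_in S I \<Longrightarrow> x \<in> I \<Longrightarrow> y \<in> I \<Longrightarrow> x + y \<in> I" by (simp add: ideal_in_def)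
lemma ideal_neg: "ideal_in S I \<Longrightarrow> x \<in> I \<Longrightarrow> - x \<in> I" by (simp add: ideal_in_def)
lemma ideal_diff: "ideal_in S I \<Longrightarrow> x \<in> I \<Longrightarrow> y \<in> I \<Longrightarrow> x - y \<in> I"
  using ideal_add[of S I x "- y"] ideal_neg[of S I y] by simp
lemma ideal_multL: "ideal_in S I \<Longrightarrow> s \<in> S \<Longrightarrow> x \<in> I \<Longrightarrow> s * x \<in> I" by (simp add: ideal_in_def)
lemma ideal_multR: "ideal_in S I \<Longrightarrow> s \<in> S \<Longrightarrow> x \<in> I \<Longrightarrow> x * s \<in> I"
  using ideal_multL[of S I s x] by (simp add: mult.commute)

lemma ideal_sum: assumes "ideal_in S I" "finite F" "\<And>i. i\<in>F \<Longrightarrow> f i \<in> I" shows "sum f F \<in> I"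
  using assms(2,3) by (induction F rule: finite_induct) (auto intro: ideal_0[OF assms(1)] ideal_add[OF assms(1)])

lemma subring_1: "subring_of A \<Longrightarrow> 1 \<in> A" by (simp add: subring_of_def)
lemma subring_0: "subring_of A \<Longrightarrow> 0 \<in> A" by (simp add: subring_of_def)

definition Bset :: "'b::field set \<Rightarrow> 'b \<Rightarrow> 'b set" where
  "Bset C y = {poly f y | f. \<forall>i. coeff f i \<in> C}"
lemma Bset_I: "(\<And>i. coeff f i \<in> C) \<Longrightarrow> poly f y \<in> Bset C y"
  unfolding Bset_def by blast
lemma Bset_E: "x \<in> Bset C y \<Longrightarrow> (\<And>f. x = poly f y \<Longrightarrow> (\<And>i. coeff f i \<in> C) \<Longrightarrow> P) \<Longrightarrow> P"
  unfolding Bset_def by blast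

lemma Bset_ideal:
  assumes A: "subring_of A" and C: "ideal_in A C"
  shows "ideal_in (Bset A y) (Bset C y)"
proof -
  have CA: "C \<subseteq> A" using C by (rule ideal_sub)
  show ?thesis unfolding ideal_in_def
  proof (intro conjI ballI)
    show "Bset C y \<subseteq> Bset A y"
    proof
      fix x assume "x \<in> Bset C y"
      then show "x \<in> Bset A y" by (rule Bset_E) (metis Bset_I CA subsetD)
    qed
    have "poly 0 y \<in> Bset C y" by (rule Bset_I) (simp add: ideal_0[OF C])
    then show "0 \<in> Bset C y" by simp
  next
    fix x z assume "x \<in> Bset C y" "z \<in> Bset C y"
    then obtain f g where fg: "x = poly f y" "\<And>i. coeff f i \<in> C" "z = poly g y" "\<And>i. coeff g i \<in> C"
      by (metis Bset_E)
    have "poly (f+g) y \<in> Bset C y" by (rule Bset_I) (simp add: ideal_add[OF C] fg)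
    then show "x + z \<in> Bset C y" by (simp add: fg)
  next
    fix x assume "x \<in> Bset C y"
    then obtain f where fg: "x = poly f y" "\<And>i. coeff f i \<in> C"
      by (metis Bset_E)
    have "poly (-f) y \<in> Bset C y" by (rule Bset_I) (simp add: ideal_neg[OF C] fg)
    then show "- x \<in> Bset C y" by (simp add: fg)
  next
    fix x z assume "x \<in> Bset A y" "z \<in> Bset C y"
    then obtain f g where fg: "x = poly f y" "\<And>i. coeff f i \<in> A" "z = poly g y" "\<And>i. coeff g i \<in> C"
      by (metis Bset_E)
    have "poly (f*g) y \<in> Bset C y"
    proof (rule Bset_I)
      fix n
      show "coeff (f*g) n \<in> C" unfolding coeff_mult
        by (rule ideal_sum[OF C]) (simp_all add: ideal_multL[OF C] fg)
    qed
    then show "x * z \<in> Bset C y" by (simp add: fg)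
  qed
qed

lemma const_in_Bset: assumes "0 \<in> C" "a \<in> C" shows "a \<in> Bset C y"
proof -
  have "poly [:a:] y \<in> Bset C y"
  proof (rule Bset_I)
    fix i show "coeff [:a:] i \<in> C" using assms by (cases i) simp_all
  qed
  then show ?thesis by simp
qed

lemma y_in_Bset: assumes "0 \<in> A" "1 \<in> A" shows "y \<in> Bset A y"
proof -
  have "poly [:0,1:] y \<in> Bset A y"
  proof (rule Bset_I)
    fix i show "coeff [:0,1:] i \<in> A" using assms by (cases i) (simp_all add: coeff_pCons split: nat.split)
  qed
  then show ?thesis by simp
qed

lemma Bset_subring: assumes A: "subring_of A" shows "subring_of (Bset A y)"
proof -
  have I: "ideal_in (Bset A y) (Bset A y)" using Bset_ideal[OF A subring_ideal_self[OF A]] .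
  have 1: "1 \<in> Bset A y" using const_in_Bset[OF subring_0[OF A] subring_1[OF A]] .
  show ?thesis unfolding subring_of_def
  proof (intro conjI ballI)
    show "0 \<in> Bset A y" by (rule ideal_0[OF I])
    show "1 \<in> Bset A y" by (rule 1)
    fix x z assume "x \<in> Bset A y" "z \<in> Bset A y"
    then show "x + z \<in> Bset A y" "x - z \<in> Bset A y" "x * z \<in> Bset A y"
      by (simp_all add: ideal_add[OF I] ideal_diff[OF I] ideal_multL[OF I])
  qed
qed

lemma key_step:
  fixes A m :: "'b::field set"
  assumes A: "subring_of A" and m: "ideal_in A m" and m1: "1 \<notin> m"
    and inv: "\<And>v. v \<in> m \<Longrightarrow> inverse (1 - v) \<in> A" and x: "x \<noteq> 0"
    and f: "\<And>i. coeff f i \<in> m" and pf: "poly f x = 1"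
    and g: "\<And>i. coeff g i \<in> m" and pg: "poly g (inverse x) = 1"
    and le: "degree g \<le> degree f"
  shows "\<exists>f'. (\<forall>i. coeff f' i \<in> m) \<and> poly f' x = 1 \<and> degree f' < degree f"
proof -
  define n where "n = degree f"
  have mA: "\<And>v. v \<in> m \<Longrightarrow> v \<in> A" using ideal_sub[OF m] by blast
  have IA: "ideal_in A A" by (rule subring_ideal_self[OF A])
  have n0: "n > 0"
  proof (rule ccontr)
    assume "\<not> n > 0"
    then have "degree f = 0" by (simp add: n_def)
    then have "poly f x = coeff f 0" by (simp add: poly_altdef)
    then show False using pf f[of 0] m1 by simp
  qed
  define G where "G = 1 - g"
  define K where "K = degree G"
  have KG: "K \<le> degree g" unfolding K_def G_def
    using degree_diff_le_max[of 1 g] by simp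
  have Kn: "K \<le> n" using KG le n_def by simp
  define u where "u = 1 - coeff g 0"
  have cG: "\<And>i. coeff G i = (if i = 0 then 1 else 0) - coeff g i" by (simp add: G_def)
  have cGA: "\<And>i. coeff G i \<in> A"
  proof -
    fix i show "coeff G i \<in> A"
      using mA[OF g[of i]] A unfolding cG subring_of_def by auto
  qed
  have u0: "u \<noteq> 0" using g[of 0] m1 by (auto simp: u_def)
  have uA: "inverse u \<in> A" unfolding u_def by (rule inv[OF g])
  define Rf where "Rf = reflect_poly G"
  have cRf: "\<And>i. coeff Rf i = (if i > K then 0 else coeff G (K - i))"
    by (simp add: Rf_def K_def coeff_reflect_poly)
  have cRfA: "\<And>i. coeff Rf i \<in> A" unfolding cRf using cGA subring_0[OF A] by simp
  have cRfK: "coeff Rf K = u" unfolding cRf by (simp add: cG u_def)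
  have pRf: "poly Rf x = 0" unfolding Rf_def using x
    by (simp add: poly_reflect_poly_nz G_def pg K_def)
  define R' where "R' = smult (inverse u) Rf"
  have cR'A: "\<And>i. coeff R' i \<in> A" unfolding R'_def using cRfA uA
    by (simp add: ideal_multL[OF IA])
  have cR'K: "coeff R' K = 1" unfolding R'_def using cRfK u0 by simp
  have pR': "poly R' x = 0" unfolding R'_def using pRf by simp
  have dR': "degree R' \<le> K"
    unfolding R'_def Rf_def K_def by (meson degree_smult_le degree_reflect_poly_le order_trans)
  define H where "H = monom 1 (n - K) * R'"
  have cH: "\<And>i. coeff H i = (if i < n - K then 0 else coeff R' (i - (n - K)))"
    unfolding H_def by (simp add: coeff_monom_mult)
  have cHA: "\<And>i. coeff H i \<in> A" unfolding cH using cR'A subring_0[OF A] by simp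
  have cHn: "coeff H n = 1" unfolding cH using Kn cR'K by simp
  have pH: "poly H x = 0" unfolding H_def using pR' by simp
  have dH: "degree H \<le> n"
  proof -
    have "degree H \<le> degree (monom (1::'b) (n - K)) + degree R'"
      unfolding H_def by (rule degree_mult_le)
    also have "\<dots> \<le> (n - K) + K" using dR' degree_monom_le[of "1::'b" "n-K"] by linarith
    finally show ?thesis using Kn by simp
  qed
  define f' where "f' = f - smult (coeff f n) H"
  have cf': "\<And>i. coeff f' i \<in> m"
    unfolding f'_def using f cHA by (simp add: ideal_diff[OF m] ideal_multR[OF m])
  have pf': "poly f' x = 1" unfolding f'_def using pf pH by simp
  have cf'n: "coeff f' n = 0" unfolding f'_def using cHn by simp
  have df': "degree f' \<le> n" unfolding f'_def
    using degree_diff_le[of f n "smult (coeff f n) H"] degree_smult_le[of "coeff f n" H] dH n_def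
    by simp
  have "degree f' < n"
  proof (rule ccontr)
    assume "\<not> degree f' < n"
    then have "degree f' = n" using df' by simp
    moreover have "f' \<noteq> 0" using pf' by auto
    ultimately show False using cf'n leading_coeff_0_iff by metis
  qed
  then show ?thesis using cf' pf' n_def by blast
qed

lemma key:
  fixes A m :: "'b::field set"
  assumes A: "subring_of A" and m: "ideal_in A m" and m1: "1 \<notin> m"
    and inv: "\<And>v. v \<in> m \<Longrightarrow> inverse (1 - v) \<in> A"
  shows "x \<noteq> 0 \<Longrightarrow> \<forall>i. coeff f i \<in> m \<Longrightarrow> poly f x = 1
    \<Longrightarrow> \<forall>i. coeff g i \<in> m \<Longrightarrow> poly g (inverse x) = 1 \<Longrightarrow> False"
proof (induction "degree f + degree g" arbitrary: f g x rule: less_induct)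
  case less
  show ?case
  proof (cases "degree g \<le> degree f")
    case True
    obtain f' where "\<forall>i. coeff f' i \<in> m" "poly f' x = 1" "degree f' < degree f"
      using key_step[OF A m m1 inv less.prems(1) _ less.prems(3) _ less.prems(5) True] less.prems(2,4)
      by blast
    then show False using less.hyps[of f' g x] less.prems by simp
  next
    case False
    have ix: "inverse x \<noteq> 0" using less.prems(1) by simp
    obtain g' where "\<forall>i. coeff g' i \<in> m" "poly g' (inverse x) = 1" "degree g' < degree g"
      using key_step[OF A m m1 inv ix, of g f] less.prems False by auto
    then show False using less.hyps[of f g' x] less.prems by simp
  qed
qed

lemma exists_prime:
  fixes B I :: "'b::comm_ring_1 set"
  assumes B: "subring_of B" and I: "ideal_in B I" and I1: "1 \<notin> I"
  shows "\<exists>Q. prime_in B Q \<and> I \<subseteq> Q"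
proof -
  define \<A> where "\<A> = {J. ideal_in B J \<and> I \<subseteq> J \<and> 1 \<notin> J}"
  have ne: "\<A> \<noteq> {}" using I I1 unfolding \<A>_def by blast
  have ch: "\<Union>\<C> \<in> \<A>" if neC: "\<C> \<noteq> {}" and chC: "subset.chain \<A> \<C>" for \<C>
  proof -
    have CA: "\<C> \<subseteq> \<A>" and lin: "\<And>X Y. X \<in> \<C> \<Longrightarrow> Y \<in> \<C> \<Longrightarrow> X \<subseteq> Y \<or> Y \<subseteq> X"
      using chC unfolding subset_chain_def by blast+
    have mem: "\<And>X. X \<in> \<C> \<Longrightarrow> ideal_in B X \<and> I \<subseteq> X \<and> 1 \<notin> X" using CA unfolding \<A>_def by blast
    obtain X0 where X0: "X0 \<in> \<C>" using neC by blast
    have "ideal_in B (\<Union>\<C>)" unfolding ideal_in_def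
    proof (intro conjI ballI)
      show "\<Union>\<C> \<subseteq> B" using mem ideal_sub by blast
      show "0 \<in> \<Union>\<C>" using X0 mem ideal_0 by blast
    next
      fix x y assume "x \<in> \<Union>\<C>" "y \<in> \<Union>\<C>"
      then obtain X Y where XY: "X \<in> \<C>" "Y \<in> \<C>" "x \<in> X" "y \<in> Y" by blast
      show "x + y \<in> \<Union>\<C>"
      proof (cases "X \<subseteq> Y")
        case True
        then have "x + y \<in> Y" using XY mem ideal_add by blast
        then show ?thesis using XY by blast
      next
        case False
        then have "Y \<subseteq> X" using lin XY by blast
        then have "x + y \<in> X" using XY mem ideal_add by blast
        then show ?thesis using XY by blast
      qed
    next
      fix x assume "x \<in> \<Union>\<C>"
      then obtain X where "X \<in> \<C>" "x \<in> X" by blast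
      then show "- x \<in> \<Union>\<C>" using mem ideal_neg by blast
    next
      fix s x assume "s \<in> B" "x \<in> \<Union>\<C>"
      then obtain X where "X \<in> \<C>" "x \<in> X" by blast
      then show "s * x \<in> \<Union>\<C>" using mem ideal_multL \<open>s \<in> B\<close> by blast
    qed
    moreover have "I \<subseteq> \<Union>\<C>" using X0 mem by blast
    moreover have "1 \<notin> \<Union>\<C>" using mem by blast
    ultimately show ?thesis unfolding \<A>_def by blast
  qed
  obtain M where M: "M \<in> \<A>" and Mmax: "\<And>X. X \<in> \<A> \<Longrightarrow> M \<subseteq> X \<Longrightarrow> X = M"
    using subset_Zorn_nonempty[OF ne ch] by blast
  have MI: "ideal_in B M" "I \<subseteq> M" "1 \<notin> M" using M unfolding \<A>_def by blast+
  have "prime_in B M" unfolding prime_in_def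
  proof (intro conjI ballI impI)
    show "ideal_in B M" by (rule MI(1))
    show "M \<noteq> B" using MI(3) subring_1[OF B] by blast
    fix a b assume a: "a \<in> B" and b: "b \<in> B" and ab: "a * b \<in> M"
    show "a \<in> M \<or> b \<in> M"
    proof (rule ccontr)
      assume nab: "\<not> (a \<in> M \<or> b \<in> M)"
      define J where "J = {q + a * r | q r. q \<in> M \<and> r \<in> B}"
      have BI: "ideal_in B B" by (rule subring_ideal_self[OF B])
      have MJ: "M \<subseteq> J"
      proof
        fix q assume "q \<in> M"
        then have "q + a * 0 \<in> J" unfolding J_def using subring_0[OF B] by blast
        then show "q \<in> J" by simp
      qed
      have aJ: "a \<in> J"
      proof -
        have "0 + a * 1 \<in> J" unfolding J_def using subring_1[OF B] ideal_0[OF MI(1)] by blast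
        then show ?thesis by simp
      qed
      have JI: "ideal_in B J" unfolding ideal_in_def
      proof (intro conjI ballI)
        show "J \<subseteq> B"
        proof
          fix z assume "z \<in> J"
          then obtain q r where "z = q + a * r" "q \<in> M" "r \<in> B" unfolding J_def by blast
          then show "z \<in> B" using ideal_sub[OF MI(1)] a ideal_add[OF BI] ideal_multL[OF BI] by blast
        qed
        show "0 \<in> J" using MJ ideal_0[OF MI(1)] by blast
      next
        fix z w assume "z \<in> J" "w \<in> J"
        then obtain q r q' r' where "z = q + a * r" "q \<in> M" "r \<in> B" "w = q' + a * r'" "q' \<in> M" "r' \<in> B"
          unfolding J_def by blast
        moreover have "q + a * r + (q' + a * r') = (q + q') + a * (r + r')" by (simp add: algebra_simps)
        ultimately show "z + w \<in> J" unfolding J_def using ideal_add[OF MI(1)] ideal_add[OF BI] by blast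
      next
        fix z assume "z \<in> J"
        then obtain q r where "z = q + a * r" "q \<in> M" "r \<in> B" unfolding J_def by blast
        moreover have "- (q + a * r) = (- q) + a * (- r)" by (simp add: algebra_simps)
        ultimately show "- z \<in> J" unfolding J_def using ideal_neg[OF MI(1)] ideal_neg[OF BI] by blast
      next
        fix s z assume s: "s \<in> B" and "z \<in> J"
        then obtain q r where "z = q + a * r" "q \<in> M" "r \<in> B" unfolding J_def by blast
        moreover have "s * (q + a * r) = (s * q) + a * (s * r)" by (simp add: algebra_simps)
        ultimately show "s * z \<in> J" unfolding J_def using ideal_multL[OF MI(1) s] ideal_multL[OF BI s] by blast
      qed
      have "J \<noteq> M" using aJ nab by blast
      then have "1 \<in> J" using Mmax[of J] JI MJ MI(2) unfolding \<A>_def by blast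
      then obtain q r where qr: "1 = q + a * r" "q \<in> M" "r \<in> B" unfolding J_def by blast
      have "b = b * q + (a * b) * r" using qr(1) by (metis mult.assoc mult.commute mult_1_right distrib_left)
      moreover have "b * q \<in> M" using ideal_multL[OF MI(1) b qr(2)] .
      moreover have "(a * b) * r \<in> M" using ideal_multR[OF MI(1) qr(3) ab] .
      ultimately have "b \<in> M" using ideal_add[OF MI(1)] by metis
      then show False using nab by blast
    qed
  qed
  then show ?thesis using MI(2) by blast
qed

definition Loc :: "'b::field set \<Rightarrow> 'b set \<Rightarrow> 'b set" where
  "Loc B Q = {f / g | f g. f \<in> B \<and> g \<in> B \<and> g \<notin> Q}"
definition LocN :: "'b::field set \<Rightarrow> 'b set \<Rightarrow> 'b set" where
  "LocN B Q = {f / g | f g. f \<in> Q \<and> g \<in> B \<and> g \<notin> Q}"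

context
  fixes B Q :: "'b::field set"
  assumes B: "subring_of B" and Q: "prime_in B Q"
begin

private lemma QI: "ideal_in B Q" using Q by (simp add: prime_in_def)
private lemma BI: "ideal_in B B" using subring_ideal_self[OF B] .
private lemma nz: "g \<notin> Q \<Longrightarrow> g \<noteq> 0" using ideal_0[OF QI] by blast
private lemma pm: "g \<in> B \<Longrightarrow> g' \<in> B \<Longrightarrow> g \<notin> Q \<Longrightarrow> g' \<notin> Q \<Longrightarrow> g * g' \<notin> Q"
  using Q unfolding prime_in_def by blast
private lemma one_nQ: "1 \<notin> Q"
proof
  assume "1 \<in> Q"
  then have "\<forall>s\<in>B. s \<in> Q" using ideal_multR[OF QI, of _ 1] by fastforce
  then show False using Q ideal_sub[OF QI] unfolding prime_in_def by blast
qed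

lemma Loc_I: "f \<in> B \<Longrightarrow> g \<in> B \<Longrightarrow> g \<notin> Q \<Longrightarrow> f / g \<in> Loc B Q"
  unfolding Loc_def by blast
lemma LocN_I: "f \<in> Q \<Longrightarrow> g \<in> B \<Longrightarrow> g \<notin> Q \<Longrightarrow> f / g \<in> LocN B Q"
  unfolding LocN_def by blast

lemma B_Loc: "B \<subseteq> Loc B Q"
proof
  fix b assume "b \<in> B"
  then have "b / 1 \<in> Loc B Q" using Loc_I subring_1[OF B] one_nQ by blast
  then show "b \<in> Loc B Q" by simp
qed

lemma Q_LocN: "Q \<subseteq> LocN B Q"
proof
  fix b assume "b \<in> Q"
  then have "b / 1 \<in> LocN B Q" using LocN_I subring_1[OF B] one_nQ by blast
  then show "b \<in> LocN B Q" by simp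
qed

lemma LocN_Loc: "LocN B Q \<subseteq> Loc B Q"
  unfolding LocN_def Loc_def using ideal_sub[OF QI] by blast

lemma Loc_sub: "subring_of (Loc B Q)"
  unfolding subring_of_def
proof (intro conjI ballI)
  show "0 \<in> Loc B Q" "1 \<in> Loc B Q" using B_Loc subring_0[OF B] subring_1[OF B] by blast+
  fix x y assume "x \<in> Loc B Q" "y \<in> Loc B Q"
  then obtain f g f' g' where fg: "x = f / g" "f \<in> B" "g \<in> B" "g \<notin> Q" "y = f' / g'" "f' \<in> B" "g' \<in> B" "g' \<notin> Q"
    unfolding Loc_def by blast
  have g0: "g \<noteq> 0" "g' \<noteq> 0" using nz fg by blast+
  have gg: "g * g' \<in> B" "g * g' \<notin> Q" using fg pm ideal_multL[OF BI] by blast+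
  have "(f * g' + f' * g) / (g * g') \<in> Loc B Q"
    using fg gg by (intro Loc_I) (simp_all add: ideal_add[OF BI] ideal_multL[OF BI])
  then show "x + y \<in> Loc B Q" using g0 unfolding fg(1,5) by (simp add: add_frac_eq)
  have "(f * g' - f' * g) / (g * g') \<in> Loc B Q"
    using fg gg by (intro Loc_I) (simp_all add: ideal_diff[OF BI] ideal_multL[OF BI])
  then show "x - y \<in> Loc B Q" using g0 unfolding fg(1,5) by (simp add: diff_frac_eq)
  have "(f * f') / (g * g') \<in> Loc B Q"
    using fg gg by (intro Loc_I) (simp_all add: ideal_multL[OF BI])
  then show "x * y \<in> Loc B Q" unfolding fg(1,5) by (simp add: times_divide_times_eq)
qed

lemma LocN_ideal: "ideal_in (Loc B Q) (LocN B Q)"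
  unfolding ideal_in_def
proof (intro conjI ballI)
  show "LocN B Q \<subseteq> Loc B Q" by (rule LocN_Loc)
  show "0 \<in> LocN B Q" using Q_LocN ideal_0[OF QI] by blast
next
  fix x y assume "x \<in> LocN B Q" "y \<in> LocN B Q"
  then obtain f g f' g' where fg: "x = f / g" "f \<in> Q" "g \<in> B" "g \<notin> Q" "y = f' / g'" "f' \<in> Q" "g' \<in> B" "g' \<notin> Q"
    unfolding LocN_def by blast
  have g0: "g \<noteq> 0" "g' \<noteq> 0" using nz fg by blast+
  have gg: "g * g' \<in> B" "g * g' \<notin> Q" using fg pm ideal_multL[OF BI] by blast+
  have "(f * g' + f' * g) / (g * g') \<in> LocN B Q"
    using fg gg by (intro LocN_I) (simp_all add: ideal_add[OF QI] ideal_multR[OF QI])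
  then show "x + y \<in> LocN B Q" using g0 unfolding fg(1,5) by (simp add: add_frac_eq)
next
  fix x assume "x \<in> LocN B Q"
  then obtain f g where fg: "x = f / g" "f \<in> Q" "g \<in> B" "g \<notin> Q"
    unfolding LocN_def by blast
  have "(- f) / g \<in> LocN B Q" using fg by (intro LocN_I) (simp_all add: ideal_neg[OF QI])
  then show "- x \<in> LocN B Q" using fg by simp
next
  fix s x assume "s \<in> Loc B Q" "x \<in> LocN B Q"
  then obtain f g f' g' where fg: "s = f / g" "f \<in> B" "g \<in> B" "g \<notin> Q" "x = f' / g'" "f' \<in> Q" "g' \<in> B" "g' \<notin> Q"
    unfolding Loc_def LocN_def by blast
  have g0: "g \<noteq> 0" "g' \<noteq> 0" using nz fg by blast+
  have gg: "g * g' \<in> B" "g * g' \<notin> Q" using fg pm ideal_multL[OF BI] by blast+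
  have "(f * f') / (g * g') \<in> LocN B Q"
    using fg gg by (intro LocN_I) (simp_all add: ideal_multL[OF QI])
  then show "s * x \<in> LocN B Q" unfolding fg(1,5) by (simp add: times_divide_times_eq)
qed

lemma one_LocN: "1 \<notin> LocN B Q"
proof
  assume "1 \<in> LocN B Q"
  then obtain f g where fg: "1 = f / g" "f \<in> Q" "g \<in> B" "g \<notin> Q"
    unfolding LocN_def by blast
  then have "g = f" using nz[OF fg(4)] by (simp add: field_simps)
  then show False using fg by blast
qed

lemma LocN_big: "ideal_in (Loc B Q) J \<Longrightarrow> 1 \<notin> J \<Longrightarrow> J \<subseteq> LocN B Q"
proof
  fix z assume J: "ideal_in (Loc B Q) J" "1 \<notin> J" and z: "z \<in> J"
  show "z \<in> LocN B Q"
  proof (rule ccontr)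
    assume zN: "z \<notin> LocN B Q"
    have "z \<in> Loc B Q" using ideal_sub[OF J(1)] z by blast
    then obtain f g where fg: "z = f / g" "f \<in> B" "g \<in> B" "g \<notin> Q"
      unfolding Loc_def by blast
    have "f \<notin> Q" using zN fg LocN_I by blast
    then have "g / f \<in> Loc B Q" using fg Loc_I by blast
    moreover have "f \<noteq> 0" "g \<noteq> 0" using nz fg \<open>f \<notin> Q\<close> by blast+
    ultimately have "(g / f) * z \<in> J" using ideal_multL[OF J(1)] z by blast
    then show False using J(2) fg \<open>f \<noteq> 0\<close> \<open>g \<noteq> 0\<close> by simp
  qed
qed

lemma ideal_ne: "ideal_in (Loc B Q) J \<Longrightarrow> J \<noteq> Loc B Q \<Longrightarrow> 1 \<notin> J"
proof
  assume J: "ideal_in (Loc B Q) J" "J \<noteq> Loc B Q" "1 \<in> J"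
  have "Loc B Q \<subseteq> J"
  proof
    fix s assume "s \<in> Loc B Q"
    then have "s * 1 \<in> J" using ideal_multL[OF J(1)] J(3) by blast
    then show "s \<in> J" by simp
  qed
  then show False using J ideal_sub by blast
qed

lemma LocN_max: "maximal_in (Loc B Q) (LocN B Q)"
  unfolding maximal_in_def
proof (intro conjI allI impI)
  show "ideal_in (Loc B Q) (LocN B Q)" by (rule LocN_ideal)
  show "LocN B Q \<noteq> Loc B Q" using one_LocN Loc_sub subring_1 by blast
  fix J assume "ideal_in (Loc B Q) J \<and> LocN B Q \<subseteq> J \<and> J \<noteq> Loc B Q"
  then show "J = LocN B Q" using LocN_big ideal_ne by blast
qed

lemma Loc_local: "local_ring (Loc B Q)"
  unfolding local_ring_def
proof (rule ex1I[of _ "LocN B Q"])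
  show "maximal_in (Loc B Q) (LocN B Q)" by (rule LocN_max)
  fix M assume "maximal_in (Loc B Q) M"
  then have M: "ideal_in (Loc B Q) M" "M \<noteq> Loc B Q"
    and Mm: "\<And>J. ideal_in (Loc B Q) J \<and> M \<subseteq> J \<and> J \<noteq> Loc B Q \<Longrightarrow> J = M"
    unfolding maximal_in_def by blast+
  have "M \<subseteq> LocN B Q" using LocN_big M ideal_ne by blast
  then show "M = LocN B Q" using Mm[of "LocN B Q"] LocN_ideal one_LocN Loc_sub subring_1 by blast
qed

lemma prime_LocN: "prime_in (Loc B Q) P \<Longrightarrow> P \<subseteq> LocN B Q"
  unfolding prime_in_def using LocN_big ideal_ne by blast

end

definition mm :: "'a::idom set \<Rightarrow> 'a fract set" where
  "mm p = {Fraction_Field.Fract a s | a s. a \<in> p \<and> s \<notin> p}"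

context
  fixes p :: "'a::idom set"
  assumes hp: "height_one_prime p"
begin

lemma pP: "prime_in UNIV p" using hp by (simp add: height_one_prime_def)
lemma pI: "ideal_in UNIV p" using pP by (simp add: prime_in_def)
lemma p0: "0 \<in> p" using ideal_0[OF pI] .
lemma p1: "1 \<notin> p"
proof
  assume "1 \<in> p"
  then have "\<forall>s. s * 1 \<in> p" using ideal_multL[OF pI] by blast
  then have "p = UNIV" by auto
  then show False using pP by (simp add: prime_in_def)
qed
lemma pnz: "s \<notin> p \<Longrightarrow> s \<noteq> 0" using p0 by blast
lemma pmul: "s \<notin> p \<Longrightarrow> t \<notin> p \<Longrightarrow> s * t \<notin> p" using pP unfolding prime_in_def by blast

lemma A_I: "s \<notin> p \<Longrightarrow> Fraction_Field.Fract a s \<in> localize_at p"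
  unfolding localize_at_def localization_def by blast
lemma A_E: "x \<in> localize_at p \<Longrightarrow> (\<And>a s. x = Fraction_Field.Fract a s \<Longrightarrow> s \<notin> p \<Longrightarrow> P) \<Longrightarrow> P"
  unfolding localize_at_def localization_def by blast
lemma m_I: "a \<in> p \<Longrightarrow> s \<notin> p \<Longrightarrow> Fraction_Field.Fract a s \<in> mm p"
  unfolding mm_def by blast
lemma m_E: "x \<in> mm p \<Longrightarrow> (\<And>a s. x = Fraction_Field.Fract a s \<Longrightarrow> a \<in> p \<Longrightarrow> s \<notin> p \<Longrightarrow> P) \<Longrightarrow> P"
  unfolding mm_def by blast

lemma emb_A: "emb a \<in> localize_at p" unfolding emb_def using A_I p1 by blast

lemma A_sub: "subring_of (localize_at p)"
  unfolding subring_of_def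
proof (intro conjI ballI)
  show "0 \<in> localize_at p" using emb_A[of 0] by (simp add: emb_def Zero_fract_def)
  show "1 \<in> localize_at p" using emb_A[of 1] by (simp add: emb_def One_fract_def)
  fix x y assume "x \<in> localize_at p" "y \<in> localize_at p"
  then obtain a s b t where ab: "x = Fraction_Field.Fract a s" "s \<notin> p" "y = Fraction_Field.Fract b t" "t \<notin> p" by (metis A_E)
  have nz: "s \<noteq> 0" "t \<noteq> 0" using pnz ab by blast+
  have st: "s * t \<notin> p" using pmul ab by blast
  show "x + y \<in> localize_at p" using A_I[OF st] ab nz by simp
  show "x - y \<in> localize_at p" using A_I[OF st] ab nz by simp
  show "x * y \<in> localize_at p" using A_I[OF st] ab nz by simp
qed

lemma m_ideal: "ideal_in (localize_at p) (mm p)"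
  unfolding ideal_in_def
proof (intro conjI ballI)
  show "mm p \<subseteq> localize_at p" using A_I unfolding mm_def by blast
  show "0 \<in> mm p" using m_I[OF p0 p1] by (simp add: Zero_fract_def)
next
  fix x y assume "x \<in> mm p" "y \<in> mm p"
  then obtain a s b t where ab: "x = Fraction_Field.Fract a s" "a \<in> p" "s \<notin> p" "y = Fraction_Field.Fract b t" "b \<in> p" "t \<notin> p" by (metis m_E)
  have nz: "s \<noteq> 0" "t \<noteq> 0" using pnz ab by blast+
  have st: "s * t \<notin> p" using pmul ab by blast
  have "a * t + b * s \<in> p" using ab ideal_add[OF pI] ideal_multR[OF pI] by blast
  then show "x + y \<in> mm p" using m_I[OF _ st] ab nz by simp
next
  fix x assume "x \<in> mm p"
  then obtain a s where ab: "x = Fraction_Field.Fract a s" "a \<in> p" "s \<notin> p" by (metis m_E)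
  then show "- x \<in> mm p" using m_I ideal_neg[OF pI] by simp
next
  fix x y assume "x \<in> localize_at p" "y \<in> mm p"
  then obtain a s b t where ab: "x = Fraction_Field.Fract a s" "s \<notin> p" "y = Fraction_Field.Fract b t" "b \<in> p" "t \<notin> p"
    by (metis A_E m_E)
  have st: "s * t \<notin> p" using pmul ab by blast
  have "a * b \<in> p" using ab ideal_multL[OF pI] by blast
  then show "x * y \<in> mm p" using m_I[OF _ st] ab by simp
qed

lemma m_1: "1 \<notin> mm p"
proof
  assume "1 \<in> mm p"
  then obtain a s where ab: "1 = Fraction_Field.Fract a s" "a \<in> p" "s \<notin> p" by (metis m_E)
  then have "Fraction_Field.Fract 1 1 = Fraction_Field.Fract a s" by (simp add: One_fract_def)
  then have "s = a" using pnz[OF ab(3)] by (simp add: eq_fract)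
  then show False using ab by blast
qed

lemma m_inv: "v \<in> mm p \<Longrightarrow> inverse (1 - v) \<in> localize_at p"
proof -
  assume "v \<in> mm p"
  then obtain a s where ab: "v = Fraction_Field.Fract a s" "a \<in> p" "s \<notin> p" by (metis m_E)
  have nz: "s \<noteq> 0" using pnz ab by blast
  have sa: "s - a \<notin> p"
  proof
    assume "s - a \<in> p"
    then have "(s - a) + a \<in> p" using ideal_add[OF pI] ab by blast
    then show False using ab by simp
  qed
  have "1 - v = Fraction_Field.Fract (s - a) s" using nz ab by (simp add: One_fract_def)
  then have "inverse (1 - v) = Fraction_Field.Fract s (s - a)" by simp
  then show ?thesis using A_I[OF sa] by simp
qed

lemma contract0: "contract {0 :: 'a fract} = {0}"
  unfolding contract_def emb_def by (auto simp: Zero_fract_def eq_fract)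

lemma y_in_A:
  assumes per: "perinormal TYPE('a)" and y1: "1 \<notin> Bset (mm p) y"
  shows "y \<in> localize_at p"
proof -
  define A where "A = localize_at p"
  define B where "B = Bset A y"
  have Asub: "subring_of A" unfolding A_def by (rule A_sub)
  have Bsub: "subring_of B" unfolding B_def by (rule Bset_subring[OF Asub])
  have I0: "ideal_in B (Bset (mm p) y)" unfolding B_def A_def by (rule Bset_ideal[OF A_sub m_ideal])
  obtain Q where Q: "prime_in B Q" and IQ: "Bset (mm p) y \<subseteq> Q"
    using exists_prime[OF Bsub I0 y1] by blast
  have QI: "ideal_in B Q" using Q by (simp add: prime_in_def)
  define S where "S = Loc B Q"
  define N where "N = LocN B Q"
  have AB: "A \<subseteq> B" unfolding B_def using const_in_Bset subring_0[OF Asub] by blast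
  have BS: "B \<subseteq> S" unfolding S_def by (rule B_Loc[OF Bsub Q])
  have Ssub: "subring_of S" unfolding S_def by (rule Loc_sub[OF Bsub Q])
  have embS: "range emb \<subseteq> S" using emb_A AB BS unfolding A_def by blast
  have ov: "overring S" unfolding overring_def using Ssub embS by blast
  have loc: "local_ring S" unfolding S_def by (rule Loc_local[OF Bsub Q])
  have NI: "ideal_in S N" unfolding S_def N_def by (rule LocN_ideal[OF Bsub Q])
  have N1: "1 \<notin> N" unfolding N_def by (rule one_LocN[OF Bsub Q])
  have QN: "Q \<subseteq> N" unfolding N_def by (rule Q_LocN[OF Bsub Q])
  have cN: "contract N = p"
  proof
    show "p \<subseteq> contract N"
    proof
      fix a assume a: "a \<in> p"
      have "emb a \<in> mm p" unfolding emb_def using m_I[OF a p1] .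
      then have "emb a \<in> Bset (mm p) y" using const_in_Bset ideal_0[OF m_ideal] by blast
      then show "a \<in> contract N" using IQ QN unfolding contract_def by blast
    qed
    show "contract N \<subseteq> p"
    proof
      fix a assume "a \<in> contract N"
      then have "emb a \<in> N" unfolding contract_def by blast
      then obtain f g where fg: "emb a = f / g" "f \<in> Q" "g \<in> B" "g \<notin> Q"
        unfolding N_def LocN_def by blast
      show "a \<in> p"
      proof (rule ccontr)
        assume a: "a \<notin> p"
        have a0: "a \<noteq> 0" using pnz[OF a] .
        have g0: "g \<noteq> 0" using fg ideal_0[OF QI] by blast
        have ia: "inverse (emb a) \<in> B" using A_I[OF a, of 1] AB unfolding A_def emb_def by (simp add: subset_iff)
        have ea0: "emb a \<noteq> 0" using a0 by (simp add: emb_def Zero_fract_def eq_fract)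
        have "g = f * inverse (emb a)" using fg(1) g0 ea0 by (simp add: field_simps)
        then have "g \<in> Q" using ideal_multR[OF QI ia fg(2)] by simp
        then show False using fg by blast
      qed
    qed
  qed
  have gd: "going_down S" unfolding going_down_def
  proof (intro allI impI)
    fix p' q Q'
    assume h: "prime_in (UNIV :: 'a set) p' \<and> prime_in (UNIV :: 'a set) q \<and> p' \<subset> q \<and>
        prime_in S Q' \<and> contract Q' = q"
    have Q'N: "Q' \<subseteq> N" using h prime_LocN[OF Bsub Q] unfolding S_def N_def by blast
    have qp: "q \<subseteq> p" using h Q'N cN unfolding contract_def by blast
    have p'0: "0 \<in> p'" using h ideal_0 unfolding prime_in_def by blast
    have q0: "{0} \<subset> q" using h p'0 by blast
    have "q = p" using hp qp q0 h unfolding height_one_prime_def by blast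
    then have p'z: "p' = {0}" using hp h p'0 unfolding height_one_prime_def by blast
    have S1: "1 \<in> S" "0 \<in> S" using Ssub by (simp_all add: subring_of_def)
    have "prime_in S {0}" unfolding prime_in_def ideal_in_def using S1 by auto
    moreover have "{0} \<subseteq> Q'" using h ideal_0 unfolding prime_in_def by blast
    ultimately show "\<exists>P. prime_in S P \<and> P \<subseteq> Q' \<and> contract P = p'"
      using contract0 p'z by blast
  qed
  have "is_localization S" using per ov loc gd unfolding perinormal_def by blast
  then obtain Mu where Mu: "multiplicative Mu" "S = localization Mu" unfolding is_localization_def by blast
  have "y \<in> S" using y_in_Bset[OF subring_0[OF Asub] subring_1[OF Asub]] BS unfolding B_def by blast
  then obtain c s where cs: "y = Fraction_Field.Fract c s" "s \<in> Mu" using Mu(2) unfolding localization_def by blast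
  have s0: "s \<noteq> 0" using Mu(1) cs(2) unfolding multiplicative_def by blast
  have "s \<notin> p"
  proof
    assume sp: "s \<in> p"
    have "Fraction_Field.Fract 1 s \<in> S" using Mu(2) cs(2) unfolding localization_def by blast
    moreover have "emb s \<in> N" using sp cN unfolding contract_def by blast
    ultimately have "Fraction_Field.Fract 1 s * emb s \<in> N" using ideal_multL[OF NI] by blast
    moreover have "Fraction_Field.Fract 1 s * emb s = 1" using s0 by (simp add: emb_def One_fract_def eq_fract)
    ultimately show False using N1 by simp
  qed
  then show ?thesis using cs A_I by blast
qed

end

theorem proposition3p2:
  assumes "perinormal TYPE('a::idom)"
    and "height_one_prime (p :: 'a set)"
  shows "valuation_ring (localize_at p)"
  unfolding valuation_ring_def
proof (intro conjI allI impI)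
  show "subring_of (localize_at p)" by (rule A_sub[OF assms(2)])
  fix x :: "'a fract" assume x: "x \<noteq> 0"
  show "x \<in> localize_at p \<or> inverse x \<in> localize_at p"
  proof (cases "1 \<in> Bset (mm p) x \<and> 1 \<in> Bset (mm p) (inverse x)")
    case True
    then obtain f g where "1 = poly f x" "\<And>i. coeff f i \<in> mm p" "1 = poly g (inverse x)" "\<And>i. coeff g i \<in> mm p"
      by (metis Bset_E)
    then have False
      using key[OF A_sub[OF assms(2)] m_ideal[OF assms(2)] m_1[OF assms(2)] m_inv[OF assms(2)] x, of f g]
      by simp
    then show ?thesis ..
  next
    case False
    then show ?thesis using y_in_A[OF assms(2) assms(1)] by blast
  qed
qed

end
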